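(* For $n\ge 3$ let $M^n$ be the $5$-ary $n\times n$ matrix with entries $M^n_{i,i}=0$ for $1\le i\le n$; $M^n_{i,i+1}=1$ for $1\le i\le n-1$; $M^n_{n,1}=1$; $M^n_{i,j}=3$ for $j\ge i+2$; $M^n_{i,1}=4$ for $2\le i\le n-1$; and $M^n_{i,j}=2$ for $2\le j\le i-1$. (For example $M^5$ has rows $(0,1,3,3,3),(4,0,1,3,3),(4,2,0,1,3),(4,2,2,0,1),(1,2,2,2,0)$.) Then $M^n$ is not a weak lonesum matrix, while every proper submatrix of $M^n$ (obtained by deleting at least one row or column) is a weak lonesum matrix.
   Context: A $q$-ary matrix has entries in $\{0,1,\ldots,q-1\}$. For a $q$-ary vector $v=(v_1,\ldots,v_n)$ its structure vector is $(a_0,a_1,\ldots,a_{q-1})$ where $a_k$ is the number of coordinates $i$ with $v_i=k$. A $q$-ary $m\times n$ matrix $M$ is a weak lonesum matrix if no other $q$-ary $m\times n$ matrix has the same structure vectors of all rows and of all columns as $M$. Here $q=5$. *)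

theory Defs
  imports Main
begin

text \<open>Matrices are functions nat => nat => nat, with 0-based indices; an m x n matrix
  is determined by its values at i < m, j < n.\<close>

definition qary_matrix :: "nat \<Rightarrow> nat \<Rightarrow> nat \<Rightarrow> (nat \<Rightarrow> nat \<Rightarrow> nat) \<Rightarrow> bool" where
  "qary_matrix q m n M \<longleftrightarrow> (\<forall>i<m. \<forall>j<n. M i j < q)"

definition struct_vec :: "nat \<Rightarrow> nat \<Rightarrow> (nat \<Rightarrow> nat) \<Rightarrow> nat list" where
  "struct_vec q n v = map (\<lambda>k. card {l. l < n \<and> v l = k}) [0..<q]"

definition row_struct :: "nat \<Rightarrow> nat \<Rightarrow> (nat \<Rightarrow> nat \<Rightarrow> nat) \<Rightarrow> nat \<Rightarrow> nat list" where
  "row_struct q n M i = struct_vec q n (\<lambda>j. M i j)"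

definition col_struct :: "nat \<Rightarrow> nat \<Rightarrow> (nat \<Rightarrow> nat \<Rightarrow> nat) \<Rightarrow> nat \<Rightarrow> nat list" where
  "col_struct q m M j = struct_vec q m (\<lambda>i. M i j)"

definition weak_lonesum :: "nat \<Rightarrow> nat \<Rightarrow> nat \<Rightarrow> (nat \<Rightarrow> nat \<Rightarrow> nat) \<Rightarrow> bool" where
  "weak_lonesum q m n M \<longleftrightarrow> qary_matrix q m n M \<and>
     (\<forall>N. qary_matrix q m n N
          \<and> (\<forall>i<m. row_struct q n N i = row_struct q n M i)
          \<and> (\<forall>j<n. col_struct q m N j = col_struct q m M j)
          \<longrightarrow> (\<forall>i<m. \<forall>j<n. N i j = M i j))"

definition submatrix :: "(nat \<Rightarrow> nat \<Rightarrow> nat) \<Rightarrow> nat list \<Rightarrow> nat list \<Rightarrow> nat \<Rightarrow> nat \<Rightarrow> nat" where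
  "submatrix M rs cs = (\<lambda>i j. M (rs ! i) (cs ! j))"

text \<open>The entry M^n_{i,j} with 1-based indices as in the paper.\<close>
definition Mn_entry :: "nat \<Rightarrow> nat \<Rightarrow> nat \<Rightarrow> nat" where
  "Mn_entry n i j =
     (if i = j then 0
      else if j = i + 1 then 1
      else if i = n \<and> j = 1 then 1
      else if j \<ge> i + 2 then 3
      else if j = 1 \<and> 2 \<le> i \<and> i \<le> n - 1 then 4
      else 2)"

definition Mn :: "nat \<Rightarrow> nat \<Rightarrow> nat \<Rightarrow> nat" where
  "Mn n = (\<lambda>i j. Mn_entry n (i + 1) (j + 1))"

end

theory Submission
  imports Defs
begin

lemma Mn_simp:
  assumes "n \<ge> 3" "x < n" "y < n"
  shows "Mn n x y = (if x = y then 0 else if y = x+1 then 1 else if x = n-1 \<and> y = 0 then 1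
     else if y \<ge> x+2 then 3 else if y = 0 then 4 else 2)"
  using assms unfolding Mn_def Mn_entry_def by auto

lemma Mn_lt5: "Mn n x y < 5"
  unfolding Mn_def Mn_entry_def by auto

lemma count_sum:
  fixes f :: "nat \<Rightarrow> int"
  assumes "finite C" "\<forall>j\<in>C. g j < q"
  shows "(\<Sum>j\<in>C. f (g j)) = (\<Sum>k<q. f k * int (card {j\<in>C. g j = k}))"
proof -
  have "(\<Sum>j\<in>C. f (g j)) = (\<Sum>j\<in>C. \<Sum>k<q. if g j = k then f k else 0)"
    using assms by (intro sum.cong) (auto simp: sum.delta)
  also have "\<dots> = (\<Sum>k<q. \<Sum>j\<in>C. if g j = k then f k else 0)"
    by (rule sum.swap)
  also have "\<dots> = (\<Sum>k<q. f k * int (card {j\<in>C. g j = k}))"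
  proof (rule sum.cong[OF refl])
    fix k
    have "(\<Sum>j\<in>C. if g j = k then f k else 0) = (\<Sum>j\<in>{j\<in>C. g j = k}. f k)"
      using assms(1) by (rule sum.inter_filter[symmetric])
    also have "\<dots> = f k * int (card {j\<in>C. g j = k})" by simp
    finally show "(\<Sum>j\<in>C. if g j = k then f k else 0) = f k * int (card {j\<in>C. g j = k})" .
  qed
  finally show ?thesis .
qed

lemma potential_unique:
  fixes a b :: "nat \<Rightarrow> nat \<Rightarrow> int" and A N :: "nat \<Rightarrow> nat \<Rightarrow> nat"
  assumes dom: "\<forall>i<m. \<forall>j<w. \<forall>k<q. k \<noteq> A i j \<longrightarrow> a k i + b k j < a (A i j) i + b (A i j) j"
    and qA: "qary_matrix q m w A" and qN: "qary_matrix q m w N"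
    and rows: "\<forall>i<m. row_struct q w N i = row_struct q w A i"
    and cols: "\<forall>j<w. col_struct q m N j = col_struct q m A j"
  shows "\<forall>i<m. \<forall>j<w. N i j = A i j"
proof (rule ccontr)
  define S where "S X = (\<Sum>i<m. \<Sum>j<w. a (X i j) i + b (X i j) j)" for X :: "nat \<Rightarrow> nat \<Rightarrow> nat"
  have split: "S X = (\<Sum>i<m. \<Sum>k<q. a k i * int (card {j. j < w \<and> X i j = k}))
       + (\<Sum>j<w. \<Sum>k<q. b k j * int (card {i. i < m \<and> X i j = k}))"
    if "qary_matrix q m w X" for X
  proof -
    have "S X = (\<Sum>i<m. \<Sum>j<w. a (X i j) i) + (\<Sum>i<m. \<Sum>j<w. b (X i j) j)"
      unfolding S_def by (simp add: sum.distrib)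
    also have "(\<Sum>i<m. \<Sum>j<w. b (X i j) j) = (\<Sum>j<w. \<Sum>i<m. b (X i j) j)"
      by (rule sum.swap)
    also have "(\<Sum>i<m. \<Sum>j<w. a (X i j) i) = (\<Sum>i<m. \<Sum>k<q. a k i * int (card {j. j < w \<and> X i j = k}))"
    proof (rule sum.cong[OF refl])
      fix i assume "i \<in> {..<m}"
      then have "\<forall>j\<in>{..<w}. X i j < q" using that unfolding qary_matrix_def by auto
      from count_sum[OF _ this, of "\<lambda>k. a k i"]
      have "(\<Sum>j<w. a (X i j) i) = (\<Sum>k<q. a k i * int (card {j\<in>{..<w}. X i j = k}))" by simp
      moreover have "\<And>k. {j\<in>{..<w}. X i j = k} = {j. j < w \<and> X i j = k}" by auto
      ultimately show "(\<Sum>j<w. a (X i j) i) = (\<Sum>k<q. a k i * int (card {j. j < w \<and> X i j = k}))"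
        by simp
    qed
    also have "(\<Sum>j<w. \<Sum>i<m. b (X i j) j) = (\<Sum>j<w. \<Sum>k<q. b k j * int (card {i. i < m \<and> X i j = k}))"
    proof (rule sum.cong[OF refl])
      fix j assume "j \<in> {..<w}"
      then have "\<forall>i\<in>{..<m}. X i j < q" using that unfolding qary_matrix_def by auto
      from count_sum[OF _ this, of "\<lambda>k. b k j"]
      have "(\<Sum>i<m. b (X i j) j) = (\<Sum>k<q. b k j * int (card {i\<in>{..<m}. X i j = k}))" by simp
      moreover have "\<And>k. {i\<in>{..<m}. X i j = k} = {i. i < m \<and> X i j = k}" by auto
      ultimately show "(\<Sum>i<m. b (X i j) j) = (\<Sum>k<q. b k j * int (card {i. i < m \<and> X i j = k}))"
        by simp
    qed
    finally show ?thesis .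
  qed
  have rc: "\<forall>i<m. \<forall>k<q. card {j. j < w \<and> N i j = k} = card {j. j < w \<and> A i j = k}"
    using rows unfolding row_struct_def struct_vec_def by (auto simp: map_eq_conv)
  have cc: "\<forall>j<w. \<forall>k<q. card {i. i < m \<and> N i j = k} = card {i. i < m \<and> A i j = k}"
    using cols unfolding col_struct_def struct_vec_def by (auto simp: map_eq_conv)
  have eq: "S N = S A"
    using split[OF qN] split[OF qA] rc cc by simp
  assume "\<not> (\<forall>i<m. \<forall>j<w. N i j = A i j)"
  then obtain i0 j0 where ij0: "i0 < m" "j0 < w" "N i0 j0 \<noteq> A i0 j0" by auto
  have le: "a (N i j) i + b (N i j) j \<le> a (A i j) i + b (A i j) j" if "i < m" "j < w" for i j
    using dom qN that unfolding qary_matrix_def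
    by (cases "N i j = A i j") (auto simp: less_imp_le)
  have lt: "a (N i0 j0) i0 + b (N i0 j0) j0 < a (A i0 j0) i0 + b (A i0 j0) j0"
    using dom qN ij0 unfolding qary_matrix_def by auto
  have "S N < S A"
    unfolding S_def
  proof (rule sum_strict_mono_ex1)
    show "\<forall>i\<in>{..<m}. (\<Sum>j<w. a (N i j) i + b (N i j) j) \<le> (\<Sum>j<w. a (A i j) i + b (A i j) j)"
      using le by (auto intro: sum_mono)
    show "\<exists>i\<in>{..<m}. (\<Sum>j<w. a (N i j) i + b (N i j) j) < (\<Sum>j<w. a (A i j) i + b (A i j) j)"
    proof (rule bexI[of _ i0])
      show "(\<Sum>j<w. a (N i0 j) i0 + b (N i0 j) j) < (\<Sum>j<w. a (A i0 j) i0 + b (A i0 j) j)"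
      proof (rule sum_strict_mono_ex1)
        show "\<exists>j\<in>{..<w}. a (N i0 j) i0 + b (N i0 j) j < a (A i0 j) i0 + b (A i0 j) j"
          using ij0 lt by auto
      qed (use ij0 le in auto)
    qed (use ij0 in auto)
  qed simp
  with eq show False by simp
qed


definition hh :: "nat \<Rightarrow> nat \<Rightarrow> nat \<Rightarrow> int" where
  "hh n p v = (int v - int p - 1) mod (2 * int n)"

lemma hh_bounds: "n > 0 \<Longrightarrow> 0 \<le> hh n p v \<and> hh n p v < 2 * int n"
  unfolding hh_def by simp

lemma hh_step:
  assumes "v < 2*n" "p < 2*n" "v \<noteq> p"
  shows "hh n p (Suc v) = hh n p v + 1"
proof (cases "v > p")
  case True
  then have "hh n p (Suc v) = int v - int p" "hh n p v = int v - int p - 1"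
    using assms unfolding hh_def by (auto intro: mod_pos_pos_trivial)
  then show ?thesis by simp
next
  case False
  then have lt: "v < p" using assms by auto
  have "(int (Suc v) - int p - 1) mod (2 * int n) = (int v - int p + 2 * int n) mod (2 * int n)"
    by (simp add: mod_add_self2)
  also have "\<dots> = int v - int p + 2 * int n" using assms lt by (intro mod_pos_pos_trivial) auto
  finally have a: "hh n p (Suc v) = int v - int p + 2 * int n" unfolding hh_def .
  have "(int v - int p - 1) mod (2 * int n) = (int v - int p - 1 + 2 * int n) mod (2 * int n)"
    by (simp add: mod_add_self2)
  also have "\<dots> = int v - int p - 1 + 2 * int n" using assms lt by (intro mod_pos_pos_trivial) auto
  finally have b: "hh n p v = int v - int p - 1 + 2 * int n" unfolding hh_def .
  show ?thesis using a b by simp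
qed

lemma hh_wrap: "hh n p (2*n) = hh n p 0"
proof -
  have "(int (2*n) - int p - 1) mod (2 * int n) = (int 0 - int p - 1 + 2 * int n) mod (2 * int n)"
    by (simp add: algebra_simps)
  also have "\<dots> = (int 0 - int p - 1) mod (2 * int n)" by (simp add: mod_add_self2)
  finally show ?thesis unfolding hh_def .
qed

definition Kc :: "nat \<Rightarrow> int" where "Kc n = 4 * int n"
definition Hc :: "nat \<Rightarrow> int" where "Hc n = 4 * (Kc n * int n)"

definition alpha :: "nat \<Rightarrow> nat \<Rightarrow> nat \<Rightarrow> nat \<Rightarrow> int" where
  "alpha n p k x = (if k = 0 then 0 else if k = 1 then - hh n p (2*x+1)
     else if k = 2 then 2 * (Kc n * int x) else if k = 3 then - 2 * (Kc n * int x)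
     else if 1 \<le> x \<and> x \<le> n - 2 then 2 * Kc n else - Hc n)"

definition beta :: "nat \<Rightarrow> nat \<Rightarrow> nat \<Rightarrow> nat \<Rightarrow> int" where
  "beta n p k y = (if k = 0 then 0 else if k = 1 then hh n p (2*y)
     else if k = 2 then (if y \<ge> 1 then - 2 * (Kc n * int y) - Kc n else - Hc n)
     else if k = 3 then 2 * (Kc n * int y) - 3 * Kc n
     else if y = 0 then 0 else - Hc n)"

lemma core:
  assumes n3: "n \<ge> 3" and xy: "x < n" "y < n" and p: "p < 2*n"
    and px: "2*x+1 \<noteq> p" and py: "2*y \<noteq> p" and k: "k < 5" and kM: "k \<noteq> Mn n x y"
  shows "alpha n p k x + beta n p k y < alpha n p (Mn n x y) x + beta n p (Mn n x y) y"
proof -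
  define K where "K = Kc n"
  define P where "P = K * int x"
  define Q where "Q = K * int y"
  define R where "R = K * int n"
  have K4: "K = 4 * int n" unfolding K_def Kc_def by simp
  have H: "Hc n = 4 * R" unfolding Hc_def R_def K_def by simp
  have Kpos: "K \<ge> 12" using n3 K4 by simp
  have P0: "P \<ge> 0" "Q \<ge> 0" unfolding P_def Q_def using Kpos by auto
  have PR: "P \<le> R - K" unfolding P_def R_def
  proof -
    have "K * int x \<le> K * (int n - 1)" using xy Kpos by (intro mult_left_mono) auto
    then show "K * int x \<le> K * int n - K" by (simp add: algebra_simps)
  qed
  have QR: "Q \<le> R - K" unfolding Q_def R_def
  proof -
    have "K * int y \<le> K * (int n - 1)" using xy Kpos by (intro mult_left_mono) auto
    then show "K * int y \<le> K * int n - K" by (simp add: algebra_simps)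
  qed
  have R3: "R \<ge> 3 * K" unfolding R_def using n3 Kpos
    by (metis mult.commute mult_left_mono of_nat_numeral of_nat_le_iff less_imp_le order.strict_trans2 zero_less_numeral)
  have diff: "P - Q = K * (int x - int y)" unfolding P_def Q_def by (simp add: algebra_simps)
  have d1: "P - Q \<ge> K" if "x \<ge> y + 1"
  proof -
    have "K * 1 \<le> K * (int x - int y)" using that Kpos by (intro mult_left_mono) auto
    then show ?thesis using diff by simp
  qed
  have d2: "Q - P \<ge> 2 * K" if "y \<ge> x + 2"
  proof -
    have "K * 2 \<le> K * (int y - int x)" using that Kpos by (intro mult_left_mono) auto
    then show ?thesis using diff by (simp add: algebra_simps)
  qed
  have Px1: "P = R - K" if "x = n - 1"
    unfolding P_def R_def using that n3 by (simp add: of_nat_diff algebra_simps)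
  have Qx1: "Q = P + K" if "y = x + 1"
    unfolding P_def Q_def using that by (simp add: algebra_simps)
  have np: "n > 0" using n3 by simp
  have hb: "0 \<le> hh n p v \<and> hh n p v < 2 * int n" for v using hh_bounds[OF np] .
  have hr: "0 \<le> hh n p (2*x+1)" "hh n p (2*x+1) < 2 * int n" using hb by auto
  have hc: "0 \<le> hh n p (2*y)" "hh n p (2*y) < 2 * int n" using hb by auto
  note defs = alpha_def beta_def K_def[symmetric] P_def[symmetric] Q_def[symmetric] H
  consider (d) "x = y" | (s) "y = x + 1" | (w) "x = n - 1" "y = 0" "x \<noteq> y" "y \<noteq> x+1"
    | (t) "y \<ge> x + 2" | (f) "y = 0" "1 \<le> x" "x \<le> n - 2"
    | (u) "1 \<le> y" "y < x"
    using xy n3 by linarith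
  then show ?thesis
  proof cases
    case d
    have "hh n p (Suc (2*x)) = hh n p (2*x) + 1" using hh_step[of "2*x" n p] d py xy p by auto
    then have t: "hh n p (2*y) - hh n p (2*x+1) = -1" using d by simp
    have M: "Mn n x y = 0" using Mn_simp[OF n3 xy] d by simp
    have PQ: "P = Q" unfolding P_def Q_def using d by simp
    show ?thesis using k kM t M d Kpos K4 R3 P0 hr hc PQ QR PR unfolding defs
      by (cases "x = 0"; cases k) (auto simp: numeral_eq_Suc)
  next
    case s
    have "hh n p (Suc (2*x+1)) = hh n p (2*x+1) + 1" using hh_step[of "2*x+1" n p] s px xy p by auto
    then have t: "hh n p (2*y) - hh n p (2*x+1) = 1" using s by simp
    have M: "Mn n x y = 1" using Mn_simp[OF n3 xy] s by simp
    show ?thesis using k kM t M s Kpos K4 R3 P0 hr hc Qx1[OF s] unfolding defs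
      by (cases k) (auto simp: numeral_eq_Suc)
  next
    case w
    have "hh n p (Suc (2*x+1)) = hh n p (2*x+1) + 1" using hh_step[of "2*x+1" n p] w px xy p by auto
    moreover have "Suc (2*x+1) = 2*n" using w n3 by simp
    ultimately have t: "hh n p (2*y) - hh n p (2*x+1) = 1" using w hh_wrap[of n p] by simp
    have M: "Mn n x y = 1" using Mn_simp[OF n3 xy] w by simp
    have a4: "\<not> (1 \<le> x \<and> x \<le> n - 2)" using w n3 by linarith
    show ?thesis using k kM t M w Kpos K4 R3 P0 hr hc Px1[OF w(1)] a4 QR unfolding defs
      by (cases k) (auto simp: numeral_eq_Suc)
  next
    case t
    have M: "Mn n x y = 3" using Mn_simp[OF n3 xy] t by simp
    show ?thesis using k kM M t Kpos K4 R3 P0 hr hc d2[OF t] QR PR unfolding defs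
      by (cases k) (auto simp: numeral_eq_Suc)
  next
    case f
    have M: "Mn n x y = 4" using Mn_simp[OF n3 xy] f n3 by auto
    have Q0: "Q = 0" unfolding Q_def using f by simp
    show ?thesis using k kM M f Kpos K4 R3 P0 hr hc QR PR Q0 unfolding defs
      by (cases k) (auto simp: numeral_eq_Suc)
  next
    case u
    have M: "Mn n x y = 2" using Mn_simp[OF n3 xy] u by auto
    show ?thesis using k kM M u Kpos K4 R3 P0 hr hc QR PR d1 unfolding defs
      by (cases k) (auto simp: numeral_eq_Suc)
  qed
qed

lemma Mn0: "n \<ge> 3 \<Longrightarrow> x < n \<Longrightarrow> l < n \<Longrightarrow> Mn n x l = 0 \<longleftrightarrow> l = x"
  by (simp add: Mn_simp)

lemma Mn1: "n \<ge> 3 \<Longrightarrow> x < n \<Longrightarrow> l < n \<Longrightarrow> Mn n x l = 1 \<longleftrightarrow> (l = x+1 \<or> (x = n-1 \<and> l = 0))"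
  by (auto simp: Mn_simp)

definition sw :: "nat \<Rightarrow> nat" where "sw v = (if v = 0 then 1 else if v = 1 then 0 else v)"

lemma swap_count:
  assumes "card {l. l < n \<and> g l = 0} = card {l. l < n \<and> g l = (1::nat)}"
  shows "card {l. l < n \<and> sw (g l) = k} = card {l. l < n \<and> g l = k}"
proof -
  have "k = 0 \<or> k = 1 \<or> (k \<noteq> 0 \<and> k \<noteq> 1)" by auto
  then show ?thesis
  proof (elim disjE)
    assume k: "k = 0"
    have "{l. l < n \<and> sw (g l) = k} = {l. l < n \<and> g l = 1}" using k by (auto simp: sw_def split: if_splits)
    then show ?thesis using assms k by simp
  next
    assume k: "k = 1"
    have "{l. l < n \<and> sw (g l) = k} = {l. l < n \<and> g l = 0}" using k by (auto simp: sw_def split: if_splits)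
    then show ?thesis using assms k by simp
  next
    assume k: "k \<noteq> 0 \<and> k \<noteq> 1"
    have "{l. l < n \<and> sw (g l) = k} = {l. l < n \<and> g l = k}" using k by (auto simp: sw_def split: if_splits)
    then show ?thesis by simp
  qed
qed

lemma not_weak:
  assumes n3: "n \<ge> 3"
  shows "\<not> weak_lonesum 5 n n (Mn n)"
proof
  assume wl: "weak_lonesum 5 n n (Mn n)"
  define N where "N i j = sw (Mn n i j)" for i j
  have qN: "qary_matrix 5 n n N"
    unfolding qary_matrix_def N_def sw_def using Mn_lt5[of n] by auto
  have rows: "\<forall>i<n. row_struct 5 n N i = row_struct 5 n (Mn n) i"
  proof (intro allI impI)
    fix x assume x: "x < n"
    have a: "{l. l < n \<and> Mn n x l = 0} = {x}" using Mn0[OF n3 x] x by auto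
    have b: "{l. l < n \<and> Mn n x l = 1} = {if x = n-1 then 0 else x+1}"
      using Mn1[OF n3 x] x n3 by auto
    have "card {l. l < n \<and> Mn n x l = 0} = card {l. l < n \<and> Mn n x l = 1}"
      unfolding a b by simp
    from swap_count[OF this]
    show "row_struct 5 n N x = row_struct 5 n (Mn n) x"
      unfolding row_struct_def struct_vec_def N_def by simp
  qed
  have cols: "\<forall>j<n. col_struct 5 n N j = col_struct 5 n (Mn n) j"
  proof (intro allI impI)
    fix y assume y: "y < n"
    have a: "{l. l < n \<and> Mn n l y = 0} = {y}" using Mn0[OF n3 _ y] y by auto
    have b: "{l. l < n \<and> Mn n l y = 1} = {if y = 0 then n-1 else y-1}"
      using Mn1[OF n3 _ y] y n3 by auto
    have "card {l. l < n \<and> Mn n l y = 0} = card {l. l < n \<and> Mn n l y = 1}"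
      unfolding a b by simp
    from swap_count[OF this]
    show "col_struct 5 n N y = col_struct 5 n (Mn n) y"
      unfolding col_struct_def struct_vec_def N_def by simp
  qed
  have "N 0 0 = Mn n 0 0" using wl qN rows cols n3 unfolding weak_lonesum_def by auto
  moreover have "Mn n 0 0 = 0" using Mn0[OF n3, of 0 0] n3 by simp
  ultimately show False unfolding N_def sw_def by simp
qed

lemma missing:
  assumes "\<forall>r\<in>set rs. r < n" "distinct rs" "length rs < n"
  shows "\<exists>r<n. r \<notin> set rs"
proof (rule ccontr)
  assume "\<not> ?thesis"
  then have "{..<n} \<subseteq> set rs" by auto
  then have "card {..<n} \<le> card (set rs)" by (intro card_mono) auto
  also have "\<dots> \<le> length rs" by (rule card_length)
  finally show False using assms by simp
qed

lemma sub_weak: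
  assumes n3: "n \<ge> 3"
    and rs: "sorted_wrt (<) rs" "\<forall>r\<in>set rs. r < n"
    and cs: "sorted_wrt (<) cs" "\<forall>c\<in>set cs. c < n"
    and len: "length rs < n \<or> length cs < n"
  shows "weak_lonesum 5 (length rs) (length cs) (submatrix (Mn n) rs cs)"
proof -
  have drs: "distinct rs" using rs(1) by (simp add: strict_sorted_iff)
  have dcs: "distinct cs" using cs(1) by (simp add: strict_sorted_iff)
  obtain p where p: "p < 2*n" "\<forall>x\<in>set rs. 2*x+1 \<noteq> p" "\<forall>y\<in>set cs. 2*y \<noteq> p"
  proof (cases "length rs < n")
    case True
    then obtain r where "r < n" "r \<notin> set rs" using missing[OF rs(2) drs] by auto
    then show ?thesis by (intro that[of "2*r+1"]) (auto, presburger)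
  next
    case False
    then have "length cs < n" using len by simp
    then obtain c where "c < n" "c \<notin> set cs" using missing[OF cs(2) dcs] by auto
    then show ?thesis by (intro that[of "2*c"]) (auto, presburger)
  qed
  let ?A = "submatrix (Mn n) rs cs"
  have qA: "qary_matrix 5 (length rs) (length cs) ?A"
    unfolding qary_matrix_def submatrix_def using Mn_lt5 by auto
  have dom: "\<forall>i<length rs. \<forall>j<length cs. \<forall>k<5. k \<noteq> ?A i j \<longrightarrow>
      alpha n p k (rs!i) + beta n p k (cs!j) < alpha n p (?A i j) (rs!i) + beta n p (?A i j) (cs!j)"
  proof (intro allI impI)
    fix i j k assume ij: "i < length rs" "j < length cs" "k < 5" "k \<noteq> ?A i j"
    have xi: "rs!i \<in> set rs" "cs!j \<in> set cs" using ij by auto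
    show "alpha n p k (rs!i) + beta n p k (cs!j) < alpha n p (?A i j) (rs!i) + beta n p (?A i j) (cs!j)"
      unfolding submatrix_def
      using core[OF n3 _ _ p(1), of "rs!i" "cs!j" k] xi rs(2) cs(2) p ij
      unfolding submatrix_def by auto
  qed
  show ?thesis
    unfolding weak_lonesum_def
    using qA potential_unique[OF dom qA] by blast
qed

theorem proposition3p8:
  fixes n :: nat
  assumes "n \<ge> 3"
  shows "\<not> weak_lonesum 5 n n (Mn n) \<and>
    (\<forall>rs cs. sorted_wrt (<) rs \<and> sorted_wrt (<) cs
       \<and> (\<forall>r\<in>set rs. r < n) \<and> (\<forall>c\<in>set cs. c < n)
       \<and> (length rs < n \<or> length cs < n)
       \<longrightarrow> weak_lonesum 5 (length rs) (length cs) (submatrix (Mn n) rs cs))"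
  using not_weak[OF assms] sub_weak[OF assms] by blast

end
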